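(* Let $G=(V,E)$ be a Laman-sparse graph on $n$ vertices and let $p=(p_1,\dots,p_n)$ be a generic configuration in $\mathbb{R}^2$, with $d_E=(\|p_i-p_j\|^2)_{ij\in E}$. Then the EDM completion system $\{X\in\mathcal{S}^n_+:\Pi_E(K(X))=d_E,\ Xe=0\}$ has singularity degree $0$; equivalently, $(G,p)$ has no nonzero positive semidefinite equilibrium stress matrix, and there is a feasible $X$ with $X\succeq0$, $Xe=0$, $\operatorname{rank}X=n-1$, i.e., a configuration $\bar p$ with affine span of dimension $n-1$ satisfying $\|\bar p_i-\bar p_j\|^2=d_{ij}$ for all $ij\in E$.
   Context: Laman-sparse: every subgraph with $k\ge 2$ vertices has at most $2k-3$ edges. Generic: coordinates satisfy no nonzero polynomial with rational coefficients. $\mathcal{S}^n_+$ is the cone of $n\times n$ positive semidefinite matrices, $e$ the all-ones vector, $K:\mathcal{S}^n\to\mathcal{S}^n$ the map $K(X)_{ij}=X_{ii}+X_{jj}-2X_{ij}$, and $\Pi_E$ the projection onto the entries indexed by $E$. The singularity degree of the system $\{X\in\mathcal{S}^n_+ : \Pi_E(K(X))=d_E,\ Xe=0\}$ is the minimum number of facial reduction steps ${\mathcal F}_0=\mathcal{S}^n_+$, ${\mathcal F}_{i+1}={\mathcal F}_i\cap Z_i^\perp$, with $Z_i={\mathcal M}^*v_i\in{\mathcal F}_i^*\setminus{\mathcal F}_i^\perp$ and $v_i$ orthogonal to the right-hand side, where ${\mathcal M}$ is the linear constraint map, needed to reach the smallest face of $\mathcal{S}^n_+$ containing the feasible set (degree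 $0$ meaning the feasible set meets the relative interior of the face $\{X\succeq 0: Xe=0\}$). Equivalently it is the singularity degree of the face of $\Pi_E(K(\{X\in\mathcal S^n_+: Xe=0\}))$ generated by $d_E$. An equilibrium stress of $(G,p)$ is $\omega:E\to\mathbb{R}$ with $\sum_{j:ij\in E}\omega_{ij}(p_i-p_j)=0$ for all $i$; its stress matrix $\Omega$ has off-diagonal entries $-\omega_{ij}$ ($0$ off $E$) and diagonal entries $\sum_j\omega_{ij}$. *)

theory Defs
  imports "HOL-Analysis.Analysis"
begin

text \<open>Vertices are the elements of a finite type 'v, so n = CARD('v).
  A graph is given by its edge set E, a set of 2-element vertex sets.
  A configuration in the plane is p :: 'v \<Rightarrow> real^2.\<close>

definition simple_graph :: "'v set set \<Rightarrow> bool" where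
  "simple_graph E \<longleftrightarrow> (\<forall>e\<in>E. card e = 2)"

definition laman_sparse :: "'v set set \<Rightarrow> bool" where
  "laman_sparse E \<longleftrightarrow>
     (\<forall>S. finite S \<and> card S \<ge> 2 \<longrightarrow> int (card {e\<in>E. e \<subseteq> S}) \<le> 2 * int (card S) - 3)"

text \<open>A polynomial is written as a finite sum over a finite set M of
  exponent vectors m (monomial \<prod>_i \<prod>_k (p i $ k)^(m i k)) with rational coefficients c m.\<close>
definition generic :: "('v::finite \<Rightarrow> real^2) \<Rightarrow> bool" where
  "generic p \<longleftrightarrow>
     (\<forall>(M :: ('v \<Rightarrow> 2 \<Rightarrow> nat) set) (c :: ('v \<Rightarrow> 2 \<Rightarrow> nat) \<Rightarrow> rat).
        finite M \<longrightarrow>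
        (\<Sum>m\<in>M. of_rat (c m) * (\<Prod>i\<in>UNIV. \<Prod>k\<in>UNIV. (p i $ k) ^ (m i k))) = 0 \<longrightarrow>
        (\<forall>m\<in>M. c m = 0))"

definition psd :: "real^'n::finite^'n \<Rightarrow> bool" where
  "psd A \<longleftrightarrow> transpose A = A \<and> (\<forall>x. 0 \<le> x \<bullet> (A *v x))"

definition Kmap :: "real^'n::finite^'n \<Rightarrow> 'n \<Rightarrow> 'n \<Rightarrow> real" where
  "Kmap X i j = X $ i $ i + X $ j $ j - 2 * X $ i $ j"

definition centred_face :: "(real^'n::finite^'n) set" where
  "centred_face = {X. psd X \<and> X *v (vec 1) = 0}"

definition edm_feasible :: "'n::finite set set \<Rightarrow> ('n \<Rightarrow> real^2) \<Rightarrow> (real^'n^'n) set" where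
  "edm_feasible E p =
     {X. X \<in> centred_face \<and>
         (\<forall>i j. {i, j} \<in> E \<longrightarrow> Kmap X i j = (norm (p i - p j))^2)}"

text \<open>Singularity degree 0: the feasible set meets the relative interior of
  the face {X \<succeq> 0 : Xe = 0}.\<close>
definition sing_degree_zero :: "'n::finite set set \<Rightarrow> ('n \<Rightarrow> real^2) \<Rightarrow> bool" where
  "sing_degree_zero E p \<longleftrightarrow> edm_feasible E p \<inter> rel_interior centred_face \<noteq> {}"

text \<open>Equilibrium stress \<omega> : E \<rightarrow> \<real> (represented as a function on vertex pairs,
  only its values on E matter).\<close>
definition equilibrium_stress :: "'n::finite set set \<Rightarrow> ('n \<Rightarrow> real^2) \<Rightarrow> ('n set \<Rightarrow> real) \<Rightarrow> bool" where
  "equilibrium_stress E p \<omega> \<longleftrightarrow>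
     (\<forall>i. (\<Sum>j\<in>{j. {i, j} \<in> E}. \<omega> {i, j} *\<^sub>R (p i - p j)) = 0)"

definition stress_matrix :: "'n::finite set set \<Rightarrow> ('n set \<Rightarrow> real) \<Rightarrow> real^'n^'n" where
  "stress_matrix E \<omega> =
     (\<chi> i j. if i = j then (\<Sum>k\<in>{k. {i, k} \<in> E}. \<omega> {i, k})
             else if {i, j} \<in> E then - \<omega> {i, j} else 0)"

end

theory Submission
  imports Defs
begin

definition monom_of :: "('v::finite \<Rightarrow> 2 \<Rightarrow> nat) \<Rightarrow> ('v \<Rightarrow> real^2) \<Rightarrow> real" where
  "monom_of m p = (\<Prod>i\<in>UNIV. \<Prod>k\<in>UNIV. (p i $ k) ^ (m i k))"

definition polyfun :: "(('v::finite \<Rightarrow> real^2) \<Rightarrow> real) \<Rightarrow> bool" where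
  "polyfun f \<longleftrightarrow> (\<exists>M c. finite M \<and> (\<forall>p. f p = (\<Sum>m\<in>M. of_rat (c m) * monom_of m p)))"

lemma generic_poly:
  assumes "generic p" "polyfun f" "f q \<noteq> 0" shows "f p \<noteq> 0"
proof
  assume fp: "f p = 0"
  obtain M c where M: "finite M" and f: "\<And>p. f p = (\<Sum>m\<in>M. of_rat (c m) * monom_of m p)"
    using assms(2) unfolding polyfun_def by blast
  have "\<forall>m\<in>M. c m = 0"
    using assms(1) M fp unfolding generic_def f monom_of_def by blast
  then have "f q = 0" unfolding f by simp
  with assms(3) show False by simp
qed

lemma mono_add: "monom_of (\<lambda>i k. m1 i k + m2 i k) p = monom_of m1 p * monom_of m2 p"
  unfolding monom_of_def by (simp add: power_add prod.distrib)

lemma mono_zero: "monom_of (\<lambda>i k. 0) p = 1"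
  unfolding monom_of_def by simp

lemma polyfun_const: "polyfun (\<lambda>p. of_rat r)"
  unfolding polyfun_def
  by (rule exI[of _ "{\<lambda>i k. 0}"], rule exI[of _ "\<lambda>_. r"]) (simp add: mono_zero)

lemma polyfun_coord: "polyfun (\<lambda>p. p i $ k)"
proof -
  define m0 where "m0 = (\<lambda>j l. if j = i \<and> l = k then 1 else (0::nat))"
  have "monom_of m0 p = p i $ k" for p
  proof -
    have e: "(p j $ l) ^ (m0 j l) = (if j = i then (if l = k then p j $ l else 1) else 1)" for j l
      unfolding m0_def by simp
    have "monom_of m0 p = (\<Prod>j\<in>UNIV. \<Prod>l\<in>UNIV. (if j = i then (if l = k then p j $ l else 1) else 1))"
      unfolding monom_of_def e ..
    also have "\<dots> = (\<Prod>j\<in>UNIV. if j = i then (\<Prod>l\<in>UNIV. (if l = k then p j $ l else 1)) else 1)"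
      by (intro prod.cong refl) simp
    also have "\<dots> = p i $ k" by (simp add: prod.delta)
    finally show ?thesis .
  qed
  then show ?thesis unfolding polyfun_def
    by (intro exI[of _ "{m0}"] exI[of _ "\<lambda>_. 1"]) simp
qed

lemma polyfun_add:
  assumes "polyfun f" "polyfun g" shows "polyfun (\<lambda>p. f p + g p)"
proof -
  obtain M1 c1 where M1: "finite M1" "\<And>p. f p = (\<Sum>m\<in>M1. of_rat (c1 m) * monom_of m p)"
    using assms(1) unfolding polyfun_def by blast
  obtain M2 c2 where M2: "finite M2" "\<And>p. g p = (\<Sum>m\<in>M2. of_rat (c2 m) * monom_of m p)"
    using assms(2) unfolding polyfun_def by blast
  define c where "c m = (if m \<in> M1 then c1 m else 0) + (if m \<in> M2 then c2 m else 0)" for m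
  have "f p + g p = (\<Sum>m\<in>M1 \<union> M2. of_rat (c m) * monom_of m p)" for p
  proof -
    have "(\<Sum>m\<in>M1 \<union> M2. of_rat (c m) * monom_of m p) =
      (\<Sum>m\<in>M1 \<union> M2. (if m \<in> M1 then of_rat (c1 m) * monom_of m p else 0)) +
      (\<Sum>m\<in>M1 \<union> M2. (if m \<in> M2 then of_rat (c2 m) * monom_of m p else 0))"
      unfolding c_def sum.distrib[symmetric] by (intro sum.cong refl) (auto simp: of_rat_add distrib_right)
    also have "\<dots> = f p + g p"
      using M1 M2 by (simp add: sum.If_cases Int_absorb1 Int_absorb2 Un_upper1 Un_upper2 Int_commute)
    finally show ?thesis by simp
  qed
  then show ?thesis unfolding polyfun_def using M1 M2 by (intro exI[of _ "M1 \<union> M2"] exI[of _ c]) simp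
qed

lemma polyfun_uminus:
  assumes "polyfun f" shows "polyfun (\<lambda>p. - f p)"
proof -
  obtain M c where M: "finite M" "\<And>p. f p = (\<Sum>m\<in>M. of_rat (c m) * monom_of m p)"
    using assms(1) unfolding polyfun_def by blast
  have "- f p = (\<Sum>m\<in>M. of_rat (- c m) * monom_of m p)" for p
    unfolding M(2) by (simp add: of_rat_minus sum_negf[symmetric])
  then show ?thesis unfolding polyfun_def using M by (intro exI[of _ M] exI[of _ "\<lambda>m. - c m"]) simp
qed

lemma polyfun_diff:
  assumes "polyfun f" "polyfun g" shows "polyfun (\<lambda>p. f p - g p)"
  using polyfun_add[OF assms(1) polyfun_uminus[OF assms(2)]] by simp

lemma polyfun_mult:
  fixes f g :: "('v::finite \<Rightarrow> real^2) \<Rightarrow> real"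
  assumes "polyfun f" "polyfun g" shows "polyfun (\<lambda>p. f p * g p)"
proof -
  obtain M1 c1 where M1: "finite M1" "\<And>p. f p = (\<Sum>m\<in>M1. of_rat (c1 m) * monom_of m p)"
    using assms(1) unfolding polyfun_def by blast
  obtain M2 c2 where M2: "finite M2" "\<And>p. g p = (\<Sum>m\<in>M2. of_rat (c2 m) * monom_of m p)"
    using assms(2) unfolding polyfun_def by blast
  define h where "h = (\<lambda>x::('v \<Rightarrow> 2 \<Rightarrow> nat) \<times> ('v \<Rightarrow> 2 \<Rightarrow> nat). \<lambda>i k. fst x i k + snd x i k)"
  define S where "S = M1 \<times> M2"
  define c where "c m = (\<Sum>x\<in>{x\<in>S. h x = m}. c1 (fst x) * c2 (snd x))" for m
  have fS: "finite S" using M1 M2 by (simp add: S_def)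
  have "f p * g p = (\<Sum>m\<in>h ` S. of_rat (c m) * monom_of m p)" for p
  proof -
    have "f p * g p = (\<Sum>x\<in>S. of_rat (c1 (fst x) * c2 (snd x)) * monom_of (h x) p)"
      unfolding M1(2) M2(2) sum_product S_def h_def sum.cartesian_product
      by (intro sum.cong refl) (auto simp: mono_add of_rat_mult)
    also have "\<dots> = (\<Sum>m\<in>h ` S. \<Sum>x\<in>{x\<in>S. h x = m}. of_rat (c1 (fst x) * c2 (snd x)) * monom_of (h x) p)"
      by (rule sum.image_gen[OF fS])
    also have "\<dots> = (\<Sum>m\<in>h ` S. of_rat (c m) * monom_of m p)"
      unfolding c_def of_rat_sum sum_distrib_right by (intro sum.cong refl) auto
    finally show ?thesis .
  qed
  then show ?thesis unfolding polyfun_def using fS by (intro exI[of _ "h ` S"] exI[of _ c]) simp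
qed

lemma polyfun_of_int: "polyfun (\<lambda>p. of_int z)"
  using polyfun_const[of "of_int z"] by simp

lemma polyfun_0: "polyfun (\<lambda>p. 0)"
  using polyfun_const[of 0] by simp

lemma polyfun_1: "polyfun (\<lambda>p. 1)"
  using polyfun_const[of 1] by simp

lemma polyfun_sum:
  assumes "\<And>i. i \<in> I \<Longrightarrow> polyfun (f i)" shows "polyfun (\<lambda>p. \<Sum>i\<in>I. f i p)"
proof (cases "finite I")
  case True
  then show ?thesis using assms
    by (induction I rule: finite_induct) (auto intro: polyfun_add polyfun_0)
qed (simp add: polyfun_0)

lemma polyfun_prod:
  assumes "\<And>i. i \<in> I \<Longrightarrow> polyfun (f i)" shows "polyfun (\<lambda>p. \<Prod>i\<in>I. f i p)"
proof (cases "finite I")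
  case True
  then show ?thesis using assms
    by (induction I rule: finite_induct) (auto intro: polyfun_mult polyfun_1)
qed (simp add: polyfun_1)

lemma polyfun_if: "polyfun f \<Longrightarrow> polyfun g \<Longrightarrow> polyfun (\<lambda>p. if P then f p else g p)"
  by (cases P) auto


definition oth :: "'v set \<Rightarrow> 'v \<Rightarrow> 'v" where
  "oth e v = (SOME w. w \<in> e \<and> w \<noteq> v)"

definition rv :: "('v \<Rightarrow> real^2) \<Rightarrow> 'v set \<Rightarrow> 'v \<Rightarrow> real^2" where
  "rv p e v = (if v \<in> e then p v - p (oth e v) else 0)"

definition eqs :: "'v set set \<Rightarrow> ('v \<Rightarrow> real^2) \<Rightarrow> ('v set \<Rightarrow> real) \<Rightarrow> bool" where
  "eqs E p \<omega> \<longleftrightarrow> (\<forall>i. (\<Sum>e\<in>E. \<omega> e *\<^sub>R rv p e i) = 0)"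

definition indep :: "'v set set \<Rightarrow> ('v \<Rightarrow> real^2) \<Rightarrow> bool" where
  "indep E p \<longleftrightarrow> (\<forall>\<omega>. eqs E p \<omega> \<longrightarrow> (\<forall>e\<in>E. \<omega> e = 0))"

lemma oth_pair: "a \<noteq> b \<Longrightarrow> oth {a, b} a = b"
  unfolding oth_def by (rule some_equality) auto

lemma oth_pair2: "a \<noteq> b \<Longrightarrow> oth {a, b} b = a"
  using oth_pair[of b a] by (simp add: insert_commute)

lemma card2_eq:
  assumes "card e = 2" "v \<in> e" shows "e = {v, oth e v}" "oth e v \<noteq> v" "oth e v \<in> e"
proof -
  obtain a b where ab: "e = {a, b}" "a \<noteq> b" using assms(1) by (meson card_2_iff)
  show "e = {v, oth e v}" "oth e v \<noteq> v" "oth e v \<in> e"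
    using assms(2) ab oth_pair[of a b] oth_pair2[of a b] by (auto simp: insert_commute)
qed

lemma rv_pair1: "a \<noteq> b \<Longrightarrow> rv p {a, b} a = p a - p b"
  by (simp add: rv_def oth_pair)

lemma rv_pair2: "a \<noteq> b \<Longrightarrow> rv p {a, b} b = p b - p a"
  by (simp add: rv_def oth_pair2)

lemma rv_other: "v \<notin> e \<Longrightarrow> rv p e v = 0"
  by (simp add: rv_def)

lemma simple_pair: "simple_graph E \<Longrightarrow> {a, b} \<in> E \<Longrightarrow> a \<noteq> b"
proof
  assume "simple_graph E" "{a, b} \<in> E" "a = b"
  then have "card {a, b} = 2" unfolding simple_graph_def by blast
  with \<open>a = b\<close> show False by simp
qed

lemma eqs_iff_vertex:
  fixes E :: "'v::finite set set"
  assumes "simple_graph E"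
  shows "(\<Sum>j\<in>{j. {i, j} \<in> E}. \<omega> {i, j} *\<^sub>R (p i - p j)) = (\<Sum>e\<in>E. \<omega> e *\<^sub>R rv p e i)"
proof -
  have "(\<Sum>e\<in>E. \<omega> e *\<^sub>R rv p e i) = (\<Sum>e\<in>{e\<in>E. i \<in> e}. \<omega> e *\<^sub>R rv p e i)"
    by (rule sum.mono_neutral_right) (auto simp: rv_def)
  also have "\<dots> = (\<Sum>j\<in>{j. {i, j} \<in> E}. \<omega> {i, j} *\<^sub>R (p i - p j))"
  proof (rule sum.reindex_bij_witness[of _ "\<lambda>j. {i, j}" "\<lambda>e. oth e i"])
    fix e assume e: "e \<in> {e\<in>E. i \<in> e}"
    then have c: "card e = 2" using assms unfolding simple_graph_def by auto
    show "{i, oth e i} = e" using card2_eq(1)[OF c] e by auto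
    show "oth e i \<in> {j. {i, j} \<in> E}" using card2_eq(1)[OF c] e by auto
    show "\<omega> {i, oth e i} *\<^sub>R (p i - p (oth e i)) = \<omega> e *\<^sub>R rv p e i"
      using card2_eq(1)[OF c] e by (auto simp: rv_def)
  next
    fix j assume "j \<in> {j. {i, j} \<in> E}"
    then have "{i, j} \<in> E" by simp
    then have "i \<noteq> j" using simple_pair[OF assms] by blast
    then show "oth {i, j} i = j" "{i, j} \<in> {e\<in>E. i \<in> e}"
      using \<open>{i,j}\<in>E\<close> by (auto simp: oth_pair)
  qed
  finally show ?thesis by simp
qed

lemma eqs_iff:
  fixes E :: "'v::finite set set"
  assumes "simple_graph E"
  shows "equilibrium_stress E p \<omega> \<longleftrightarrow> eqs E p \<omega>"
  unfolding equilibrium_stress_def eqs_def eqs_iff_vertex[OF assms] ..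

definition Gm :: "'v::finite set set \<Rightarrow> ('v \<Rightarrow> real^2) \<Rightarrow> real^('v set)^('v set)" where
  "Gm E p = (\<chi> e f. if e \<in> E \<and> f \<in> E then (\<Sum>v\<in>UNIV. rv p e v \<bullet> rv p f v)
                  else if e = f then 1 else 0)"

lemma Gm_mult:
  fixes E :: "'v::finite set set"
  shows "(Gm E p *v x) $ e = (if e \<in> E then (\<Sum>v\<in>UNIV. rv p e v \<bullet> (\<Sum>f\<in>E. x $ f *\<^sub>R rv p f v)) else x $ e)"
proof (cases "e \<in> E")
  case True
  have "(Gm E p *v x) $ e = (\<Sum>f\<in>UNIV. (if f \<in> E then (\<Sum>v\<in>UNIV. rv p e v \<bullet> rv p f v) else 0) * x $ f)"
    unfolding matrix_vector_mult_def Gm_def using True by (auto intro: sum.cong)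
  also have "\<dots> = (\<Sum>f\<in>E. (\<Sum>v\<in>UNIV. rv p e v \<bullet> rv p f v) * x $ f)"
    by (rule sum.mono_neutral_cong_right) auto
  also have "\<dots> = (\<Sum>f\<in>E. \<Sum>v\<in>UNIV. x $ f * (rv p e v \<bullet> rv p f v))"
    by (simp add: sum_distrib_left mult.commute)
  also have "\<dots> = (\<Sum>v\<in>UNIV. \<Sum>f\<in>E. x $ f * (rv p e v \<bullet> rv p f v))"
    by (rule sum.swap)
  also have "\<dots> = (\<Sum>v\<in>UNIV. rv p e v \<bullet> (\<Sum>f\<in>E. x $ f *\<^sub>R rv p f v))"
    by (simp add: inner_sum_right)
  finally show ?thesis using True by simp
next
  case False
  have "(Gm E p *v x) $ e = (\<Sum>f\<in>UNIV. (if e = f then 1 else 0) * x $ f)"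
    unfolding matrix_vector_mult_def Gm_def using False by (auto intro: sum.cong)
  also have "\<dots> = (\<Sum>f\<in>UNIV. if e = f then x $ e else 0)"
    by (intro sum.cong refl) auto
  finally show ?thesis using False by simp
qed

lemma indep_iff_det:
  fixes E :: "'v::finite set set"
  shows "indep E p \<longleftrightarrow> det (Gm E p) \<noteq> 0"
proof -
  have "det (Gm E p) \<noteq> 0 \<longleftrightarrow> \<not> (\<exists>x. x \<noteq> 0 \<and> Gm E p *v x = 0)"
    using det_eq_0_rank[of "Gm E p"] matrix_nonfull_linear_equations_eq[of "Gm E p"]
      rank_bound[of "Gm E p"] by auto
  also have "\<dots> \<longleftrightarrow> indep E p"
  proof
    assume H: "\<not> (\<exists>x. x \<noteq> 0 \<and> Gm E p *v x = 0)"
    show "indep E p" unfolding indep_def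
    proof (intro allI impI ballI)
      fix \<omega> e assume eq: "eqs E p \<omega>" and e: "e \<in> E"
      define x where "x = (\<chi> f. if f \<in> E then \<omega> f else 0)"
      have S: "(\<Sum>f\<in>E. x $ f *\<^sub>R rv p f v) = 0" for v
        using eq unfolding eqs_def x_def by simp
      have "Gm E p *v x = 0"
        by (simp add: vec_eq_iff Gm_mult S) (simp add: x_def)
      then have "x = 0" using H by blast
      then show "\<omega> e = 0" using e by (simp add: x_def vec_eq_iff split: if_splits)
    qed
  next
    assume I: "indep E p"
    show "\<not> (\<exists>x. x \<noteq> 0 \<and> Gm E p *v x = 0)"
    proof
      assume "\<exists>x. x \<noteq> 0 \<and> Gm E p *v x = 0"
      then obtain x where x0: "x \<noteq> 0" and Gx: "Gm E p *v x = 0" by blast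
      define S where "S v = (\<Sum>f\<in>E. x $ f *\<^sub>R rv p f v)" for v
      have out: "x $ e = 0" if "e \<notin> E" for e
        using Gx[THEN arg_cong[where f="\<lambda>y. y $ e"]] that by (simp add: Gm_mult)
      have "0 = (\<Sum>e\<in>E. x $ e * (Gm E p *v x) $ e)" using Gx by simp
      also have "\<dots> = (\<Sum>e\<in>E. x $ e * (\<Sum>v\<in>UNIV. rv p e v \<bullet> S v))"
        by (intro sum.cong refl) (simp add: Gm_mult S_def)
      also have "\<dots> = (\<Sum>v\<in>UNIV. S v \<bullet> S v)"
      proof -
        have "(\<Sum>e\<in>E. x $ e * (\<Sum>v\<in>UNIV. rv p e v \<bullet> S v)) = (\<Sum>e\<in>E. \<Sum>v\<in>UNIV. (x $ e *\<^sub>R rv p e v) \<bullet> S v)"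
          by (simp add: sum_distrib_left)
        also have "\<dots> = (\<Sum>v\<in>UNIV. \<Sum>e\<in>E. (x $ e *\<^sub>R rv p e v) \<bullet> S v)"
          by (rule sum.swap)
        also have "\<dots> = (\<Sum>v\<in>UNIV. S v \<bullet> S v)"
        proof (intro sum.cong refl)
          fix v
          show "(\<Sum>e\<in>E. (x $ e *\<^sub>R rv p e v) \<bullet> S v) = S v \<bullet> S v"
            unfolding inner_sum_left[symmetric] S_def[of v, symmetric] ..
        qed
        finally show ?thesis .
      qed
      finally have "(\<Sum>v\<in>UNIV. S v \<bullet> S v) = 0" by simp
      then have "\<forall>v\<in>UNIV. S v \<bullet> S v = 0" by (subst (asm) sum_nonneg_eq_0_iff) auto
      then have "eqs E p (\<lambda>f. x $ f)" unfolding eqs_def S_def by simp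
      then have "\<forall>e\<in>E. x $ e = 0" using I unfolding indep_def by blast
      then have "x = 0" using out by (auto simp: vec_eq_iff)
      with x0 show False by simp
    qed
  qed
  finally show ?thesis by simp
qed

lemma rv_comp: "rv p e v $ k = (if v \<in> e then p v $ k - p (oth e v) $ k else 0)"
  by (simp add: rv_def)

lemma polyfun_rv: "polyfun (\<lambda>p. rv p e v $ k)"
  unfolding rv_comp by (intro polyfun_if polyfun_diff polyfun_coord polyfun_0)

lemma polyfun_inner_rv: "polyfun (\<lambda>p. rv p e v \<bullet> rv p f v)"
  unfolding inner_vec_def inner_real_def by (intro polyfun_sum polyfun_mult polyfun_rv)

lemma polyfun_det_Gm:
  fixes E :: "'v::finite set set"
  shows "polyfun (\<lambda>p. det (Gm E p))"
proof -
  have ent: "polyfun (\<lambda>p. Gm E p $ e $ f)" for e f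
    unfolding Gm_def vec_lambda_beta by (intro polyfun_if polyfun_sum polyfun_inner_rv polyfun_0 polyfun_1)
  show ?thesis unfolding det_def
    by (intro polyfun_sum polyfun_mult polyfun_prod polyfun_of_int ent)
qed

lemma indep_transfer:
  fixes E :: "'v::finite set set"
  assumes "generic p" "indep E q" shows "indep E p"
  using generic_poly[OF assms(1) polyfun_det_Gm, of E q] assms(2) by (simp add: indep_iff_det)


definition iE :: "'v set set \<Rightarrow> 'v set \<Rightarrow> nat" where
  "iE E S = card {e\<in>E. e \<subseteq> S}"

lemma sparse_iE: "laman_sparse E \<longleftrightarrow> (\<forall>S. finite S \<and> card S \<ge> 2 \<longrightarrow> int (iE E S) \<le> 2 * int (card S) - 3)"
  unfolding laman_sparse_def iE_def ..

lemma sparse_subset: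
  fixes E :: "'v::finite set set"
  assumes "laman_sparse E" "F \<subseteq> E" shows "laman_sparse F"
  unfolding sparse_iE
proof (intro allI impI)
  fix S :: "'v set" assume S: "finite S \<and> 2 \<le> card S"
  have "iE F S \<le> iE E S" unfolding iE_def by (rule card_mono) (use assms(2) in auto)
  then show "int (iE F S) \<le> 2 * int (card S) - 3" using assms(1) S unfolding sparse_iE by force
qed

lemma simple_subset: "simple_graph E \<Longrightarrow> F \<subseteq> E \<Longrightarrow> simple_graph F"
  unfolding simple_graph_def by blast

lemma double_count:
  fixes E :: "'v::finite set set"
  shows "(\<Sum>v\<in>W. card {e\<in>E. v \<in> e}) = (\<Sum>e\<in>E. card (e \<inter> W))"
proof -
  have "(\<Sum>v\<in>W. card {e\<in>E. v \<in> e}) = (\<Sum>v\<in>W. \<Sum>e\<in>E. (if v \<in> e then 1 else 0))"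
    by (intro sum.cong refl) (simp add: sum.If_cases Int_def)
  also have "\<dots> = (\<Sum>e\<in>E. \<Sum>v\<in>W. (if v \<in> e then 1 else 0))"
    by (rule sum.swap)
  also have "\<dots> = (\<Sum>e\<in>E. card (e \<inter> W))"
    by (intro sum.cong refl) (simp add: sum.If_cases Int_def conj_commute)
  finally show ?thesis .
qed

lemma low_degree:
  fixes E :: "'v::finite set set"
  assumes "simple_graph E" "laman_sparse E" "E \<noteq> {}"
  shows "\<exists>v. 1 \<le> card {e\<in>E. v \<in> e} \<and> card {e\<in>E. v \<in> e} \<le> 3"
proof (rule ccontr)
  assume H: "\<not> ?thesis"
  define W where "W = \<Union>E"
  obtain e0 where e0: "e0 \<in> E" using assms(3) by blast
  have c0: "card e0 = 2" using assms(1) e0 unfolding simple_graph_def by auto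
  have "card e0 \<le> card W" unfolding W_def by (rule card_mono) (use e0 in auto)
  then have W2: "card W \<ge> 2" using c0 by simp
  have iEW: "iE E W = card E" unfolding iE_def W_def by (rule arg_cong[where f=card]) auto
  have sp: "int (card E) \<le> 2 * int (card W) - 3"
    using assms(2) W2 iEW unfolding sparse_iE by force
  have deg4: "card {e\<in>E. v \<in> e} \<ge> 4" if vW: "v \<in> W" for v
  proof -
    obtain e where "e \<in> E" "v \<in> e" using vW unfolding W_def by blast
    then have "{e} \<subseteq> {e\<in>E. v \<in> e}" by auto
    then have "1 \<le> card {e\<in>E. v \<in> e}" using card_mono[of "{e\<in>E. v \<in> e}" "{e}"] by simp
    then show ?thesis using H by force
  qed
  have "(\<Sum>v\<in>W. card {e\<in>E. v \<in> e}) = (\<Sum>e\<in>E. card (e \<inter> W))" by (rule double_count)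
  also have "\<dots> = (\<Sum>e\<in>E. 2)"
    by (intro sum.cong refl) (use assms(1) in \<open>auto simp: simple_graph_def W_def Int_absorb2 Union_upper\<close>)
  finally have "(\<Sum>v\<in>W. card {e\<in>E. v \<in> e}) = 2 * card E" by simp
  moreover have "(\<Sum>v\<in>W. card {e\<in>E. v \<in> e}) \<ge> (\<Sum>v\<in>W. 4)" by (rule sum_mono) (use deg4 in auto)
  ultimately have "2 * card E \<ge> 4 * card W" by simp
  with sp show False by linarith
qed

locale ext1_setup =
  fixes E :: "'v::finite set set" and v a b c :: 'v
  assumes simple: "simple_graph E" and sparse: "laman_sparse E"
    and star: "{e\<in>E. v \<in> e} = {{v, a}, {v, b}, {v, c}}"
    and dist: "a \<noteq> b" "b \<noteq> c" "a \<noteq> c" "v \<noteq> a" "v \<noteq> b" "v \<noteq> c"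
begin

definition F where "F = {e\<in>E. v \<notin> e}"

definition tight where "tight S \<longleftrightarrow> card S \<ge> 2 \<and> int (iE F S) = 2 * int (card S) - 3"

lemma F_sub: "F \<subseteq> E" unfolding F_def by auto

lemma F_sparse: "laman_sparse F" using sparse_subset[OF sparse F_sub] .

lemma F_simple: "simple_graph F" using simple_subset[OF simple F_sub] .

lemma F_bound: "card S \<ge> 2 \<Longrightarrow> int (iE F S) \<le> 2 * int (card S) - 3"
  using F_sparse unfolding sparse_iE by simp

lemma finE: "finite (E' :: 'v set set)" by simp

lemma iE_mono: "S \<subseteq> T \<Longrightarrow> iE F S \<le> iE F T"
  unfolding iE_def by (rule card_mono) auto

lemma big_contra:
  assumes "{a, b, c} \<subseteq> U" "v \<notin> U" "int (iE F U) \<ge> 2 * int (card U) - 3"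
  shows False
proof -
  define S where "S = insert v U"
  have cS: "card S = card U + 1" using assms(2) by (simp add: S_def)
  have cU: "card U \<ge> 3"
  proof -
    have "card {a,b,c} \<le> card U" by (rule card_mono) (use assms(1) in auto)
    then show ?thesis using dist by simp
  qed
  have disj: "{e\<in>F. e \<subseteq> U} \<inter> {{v, a}, {v, b}, {v, c}} = {}" unfolding F_def by auto
  have c3: "card {{v, a}, {v, b}, {v, c}} = 3"
    using dist by (auto simp: doubleton_eq_iff card_insert_if)
  have sub: "{e\<in>F. e \<subseteq> U} \<union> {{v, a}, {v, b}, {v, c}} \<subseteq> {e\<in>E. e \<subseteq> S}"
    using star assms(1) unfolding F_def S_def by blast
  have "iE F U + 3 = card ({e\<in>F. e \<subseteq> U} \<union> {{v, a}, {v, b}, {v, c}})"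
    unfolding iE_def by (subst card_Un_disjoint) (use disj c3 in auto)
  also have "\<dots> \<le> iE E S" unfolding iE_def by (rule card_mono[OF _ sub]) simp
  finally have "iE F U + 3 \<le> iE E S" .
  moreover have "int (iE E S) \<le> 2 * int (card S) - 3"
  proof -
    have "finite S \<and> 2 \<le> card S" using cS cU by simp
    with sparse show ?thesis unfolding sparse_iE by blast
  qed
  ultimately show False using assms(3) cS by linarith
qed

lemma union_tight:
  assumes "tight X" "tight Y" "card (X \<inter> Y) \<ge> 2"
  shows "tight (X \<union> Y)"
proof -
  have fin: "finite X" "finite Y" by simp_all
  let ?A = "{e\<in>F. e \<subseteq> X}" and ?B = "{e\<in>F. e \<subseteq> Y}"
  have AB: "?A \<inter> ?B = {e\<in>F. e \<subseteq> X \<inter> Y}" by auto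
  have "card ?A + card ?B = card (?A \<union> ?B) + card (?A \<inter> ?B)"
    by (rule card_Un_Int) simp_all
  moreover have "card (?A \<union> ?B) \<le> iE F (X \<union> Y)" unfolding iE_def by (rule card_mono) auto
  moreover have "int (card (?A \<inter> ?B)) \<le> 2 * int (card (X \<inter> Y)) - 3"
    unfolding AB using F_bound[OF assms(3)] by (simp add: iE_def)
  moreover have "card X + card Y = card (X \<union> Y) + card (X \<inter> Y)" by (rule card_Un_Int) simp_all
  moreover have "card (X \<union> Y) \<ge> 2" using assms(1) card_mono[of "X \<union> Y" X] unfolding tight_def by simp
  ultimately show ?thesis using assms(1,2) F_bound[of "X \<union> Y"] unfolding tight_def iE_def by linarith
qed

lemma blocked:
  assumes xy: "x \<in> {a, b, c}" "y \<in> {a, b, c}" "x \<noteq> y"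
    and nb: "{x, y} \<in> E \<or> \<not> laman_sparse (insert {x, y} F)"
  shows "\<exists>S. {x, y} \<subseteq> S \<and> v \<notin> S \<and> tight S"
proof -
  have xv: "x \<noteq> v" "y \<noteq> v" using xy dist by auto
  have "\<exists>S. {x, y} \<subseteq> S \<and> tight S"
  proof (cases "{x, y} \<in> E")
    case True
    then have inF: "{x, y} \<in> F" using xv unfolding F_def by auto
    have c2: "card {x, y} = 2" using xy by simp
    have "{{x, y}} \<subseteq> {e\<in>F. e \<subseteq> {x, y}}" using inF by auto
    then have "1 \<le> iE F {x, y}" unfolding iE_def using card_mono[of "{e\<in>F. e \<subseteq> {x, y}}" "{{x,y}}"] by simp
    then have "tight {x, y}" unfolding tight_def using F_bound[of "{x, y}"] c2 by simp
    then show ?thesis by blast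
  next
    case False
    then have ns: "\<not> laman_sparse (insert {x, y} F)" using nb by simp
    then obtain S :: "'v set" where S: "card S \<ge> 2" "int (iE (insert {x, y} F) S) > 2 * int (card S) - 3"
      unfolding sparse_iE by force
    have le: "iE (insert {x, y} F) S \<le> iE F S + (if {x, y} \<subseteq> S then 1 else 0)"
    proof -
      have "{e\<in>insert {x, y} F. e \<subseteq> S} \<subseteq> (if {x, y} \<subseteq> S then insert {x, y} {e\<in>F. e \<subseteq> S} else {e\<in>F. e \<subseteq> S})"
        by auto
      then have "iE (insert {x, y} F) S \<le> card (if {x, y} \<subseteq> S then insert {x, y} {e\<in>F. e \<subseteq> S} else {e\<in>F. e \<subseteq> S})"
        unfolding iE_def by (intro card_mono) auto
      also have "\<dots> \<le> iE F S + (if {x, y} \<subseteq> S then 1 else 0)"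
        unfolding iE_def by (auto simp: card_insert_le_m1 card_insert_if)
      finally show ?thesis .
    qed
    have "{x, y} \<subseteq> S"
    proof (rule ccontr)
      assume "\<not> {x, y} \<subseteq> S"
      then show False using le S F_bound[of S] by (simp split: if_splits)
    qed
    then have "tight S" using le S F_bound[of S] unfolding tight_def by simp
    then show ?thesis using \<open>{x,y} \<subseteq> S\<close> by blast
  qed
  then obtain S where S: "{x, y} \<subseteq> S" "tight S" by blast
  have "v \<notin> S"
  proof
    assume vS: "v \<in> S"
    define S' where "S' = S - {v}"
    have eq: "{e\<in>F. e \<subseteq> S'} = {e\<in>F. e \<subseteq> S}" unfolding S'_def F_def by auto
    have cS': "card S = Suc (card S')" unfolding S'_def by (rule card.remove) (use vS in simp_all)
    have "{x, y} \<subseteq> S'" using S(1) xv by (auto simp: S'_def)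
    then have "card {x, y} \<le> card S'" by (intro card_mono) simp_all
    then have "card S' \<ge> 2" using xy by simp
    then have "int (iE F S') \<le> 2 * int (card S') - 3" by (rule F_bound)
    moreover have "iE F S' = iE F S" unfolding iE_def eq ..
    ultimately show False using S(2) cS' unfolding tight_def by linarith
  qed
  then show ?thesis using S by blast
qed

lemma one_elem: "finite A \<Longrightarrow> card A < 2 \<Longrightarrow> w \<in> A \<Longrightarrow> A = {w}"
proof -
  assume a: "finite A" "card A < 2" "w \<in> A"
  then have "card A \<le> Suc 0" by simp
  then have "\<forall>a1\<in>A. \<forall>a2\<in>A. a1 = a2" using card_le_Suc0_iff_eq[OF a(1)] by blast
  then show "A = {w}" using a(3) by blast
qed

lemma no_edge_single: "{e\<in>F. e \<subseteq> {w}} = {}"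
proof (rule ccontr)
  assume "{e\<in>F. e \<subseteq> {w}} \<noteq> {}"
  then obtain e where e: "e \<in> F" "e \<subseteq> {w}" by blast
  have "card e \<le> card {w}" by (rule card_mono) (use e in simp_all)
  moreover have "card e = 2" using F_simple e(1) unfolding simple_graph_def by blast
  ultimately show False by simp
qed

lemma single_inter:
  assumes "tight X" "tight Y" "v \<notin> X" "v \<notin> Y" "{a,b,c} \<subseteq> X \<union> Y" "\<not> card (X \<inter> Y) < 2"
  shows False
proof -
  have "card (X \<inter> Y) \<ge> 2" using assms(6) by simp
  then have t: "tight (X \<union> Y)" by (rule union_tight[OF assms(1,2)])
  show False using big_contra[of "X \<union> Y"] t assms(3-5) unfolding tight_def by auto
qed

lemma ext1_pair:
  "\<exists>x y z. {x, y, z} = {a, b, c} \<and> x \<noteq> y \<and> x \<noteq> z \<and> y \<noteq> z \<and> {x, y} \<notin> E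
     \<and> laman_sparse (insert {x, y} F)"
proof (rule ccontr)
  assume H: "\<not> ?thesis"
  have bl: "\<exists>S. {x, y} \<subseteq> S \<and> v \<notin> S \<and> tight S"
    if "{x, y, z} = {a, b, c}" "x \<noteq> y" "x \<noteq> z" "y \<noteq> z" for x y z
  proof -
    have xin: "x \<in> {a, b, c}" "y \<in> {a, b, c}" by (subst that(1)[symmetric], simp)+
    have "{x, y} \<in> E \<or> \<not> laman_sparse (insert {x, y} F)" using H that by blast
    then show ?thesis using blocked[OF xin that(2)] by blast
  qed
  have s1: "{b, c, a} = {a, b, c}" and s2: "{a, c, b} = {a, b, c}" by auto
  obtain X where X: "{a, b} \<subseteq> X" "v \<notin> X" "tight X"
    using bl[of a b c] dist by blast
  obtain Y where Y: "{b, c} \<subseteq> Y" "v \<notin> Y" "tight Y"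
    using bl[OF s1] dist by blast
  obtain Z where Z: "{a, c} \<subseteq> Z" "v \<notin> Z" "tight Z"
    using bl[OF s2] dist by blast
  have XY: "card (X \<inter> Y) < 2" by (rule ccontr, rule single_inter[OF X(3) Y(3) X(2) Y(2)]) (use X Y in auto)
  have YZ: "card (Y \<inter> Z) < 2" by (rule ccontr, rule single_inter[OF Y(3) Z(3) Y(2) Z(2)]) (use Y Z in auto)
  have XZ: "card (X \<inter> Z) < 2" by (rule ccontr, rule single_inter[OF X(3) Z(3) X(2) Z(2)]) (use X Z in auto)
  have iXY: "X \<inter> Y = {b}" using one_elem[of "X \<inter> Y" b] XY X Y by auto
  have iYZ: "Y \<inter> Z = {c}" using one_elem[of "Y \<inter> Z" c] YZ Y Z by auto
  have iXZ: "X \<inter> Z = {a}" using one_elem[of "X \<inter> Z" a] XZ X Z by auto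
  let ?A = "{e\<in>F. e \<subseteq> X}" and ?B = "{e\<in>F. e \<subseteq> Y}" and ?C = "{e\<in>F. e \<subseteq> Z}"
  have dAB: "?A \<inter> ?B = {}" using no_edge_single[of b] iXY by blast
  have dBC: "?B \<inter> ?C = {}" using no_edge_single[of c] iYZ by blast
  have dAC: "?A \<inter> ?C = {}" using no_edge_single[of a] iXZ by blast
  have cABC: "card (?A \<union> ?B \<union> ?C) = card ?A + card ?B + card ?C"
    using dAB dBC dAC by (simp add: card_Un_disjoint Int_Un_distrib2)
  define U where "U = X \<union> Y \<union> Z"
  have "card (?A \<union> ?B \<union> ?C) \<le> iE F U" unfolding iE_def U_def by (rule card_mono) auto
  have cXY: "card X + card Y = card (X \<union> Y) + 1"
    using card_Un_Int[of X Y] iXY by simp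
  have iXYZ: "(X \<union> Y) \<inter> Z = {a, c}" using iXZ iYZ by auto
  have cU: "card (X \<union> Y) + card Z = card U + 2"
    using card_Un_Int[of "X \<union> Y" Z] iXYZ dist unfolding U_def by simp
  have "int (iE F U) \<ge> 2 * int (card U) - 3"
    using \<open>card (?A \<union> ?B \<union> ?C) \<le> iE F U\<close> cABC cXY cU X(3) Y(3) Z(3)
    unfolding tight_def iE_def by linarith
  moreover have "{a, b, c} \<subseteq> U" "v \<notin> U" using X Y Z unfolding U_def by auto
  ultimately show False using big_contra by blast
qed

end


definition det2 :: "real^2 \<Rightarrow> real^2 \<Rightarrow> real" where
  "det2 u w = u $ 1 * w $ 2 - u $ 2 * w $ 1"

lemma generic_distinct:
  fixes p :: "'v::finite \<Rightarrow> real^2"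
  assumes "generic p" "a \<noteq> b" shows "p a \<noteq> p b"
proof -
  define q :: "'v \<Rightarrow> real^2" where "q = (\<lambda>i. if i = a then axis 1 1 else 0)"
  have pf: "polyfun (\<lambda>p. p a $ 1 - p b $ 1)" by (intro polyfun_diff polyfun_coord)
  have "q a $ 1 - q b $ 1 \<noteq> 0" using assms(2) by (simp add: q_def axis_def)
  then have "p a $ 1 - p b $ 1 \<noteq> 0" using generic_poly[OF assms(1) pf] by blast
  then show ?thesis by auto
qed

lemma generic_det2:
  fixes p :: "'v::finite \<Rightarrow> real^2"
  assumes "generic p" "a \<noteq> b" "a \<noteq> c" "b \<noteq> c"
  shows "det2 (p b - p a) (p c - p a) \<noteq> 0"
proof -
  define q :: "'v \<Rightarrow> real^2" where "q = (\<lambda>i. if i = b then axis 1 1 else if i = c then axis 2 1 else 0)"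
  have pf: "polyfun (\<lambda>p. det2 (p b - p a) (p c - p a))"
    unfolding det2_def vector_minus_component
    by (intro polyfun_diff polyfun_mult polyfun_coord)
  have "det2 (q b - q a) (q c - q a) \<noteq> 0" using assms(2-4) by (simp add: q_def axis_def det2_def)
  then show ?thesis using generic_poly[OF assms(1) pf] by blast
qed

lemma lin2:
  fixes u1 u2 w1 w2 \<alpha> \<beta> :: real
  assumes "u1 * w2 - u2 * w1 \<noteq> 0" "\<alpha> * u1 + \<beta> * w1 = 0" "\<alpha> * u2 + \<beta> * w2 = 0"
  shows "\<alpha> = 0 \<and> \<beta> = 0"
proof -
  have "\<alpha> * (u1 * w2 - u2 * w1) = w2 * (\<alpha> * u1 + \<beta> * w1) - w1 * (\<alpha> * u2 + \<beta> * w2)"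
    by (simp add: algebra_simps)
  then have a: "\<alpha> = 0" using assms by simp
  have "\<beta> * (u1 * w2 - u2 * w1) = u1 * (\<alpha> * u2 + \<beta> * w2) - u2 * (\<alpha> * u1 + \<beta> * w1)"
    by (simp add: algebra_simps)
  then have b: "\<beta> = 0" using assms by simp
  show ?thesis using a b by simp
qed

lemma vec2_eq0: "(x::real^2) = 0 \<longleftrightarrow> x $ 1 = 0 \<and> x $ 2 = 0"
  by (metis (mono_tags, lifting) exhaust_2 vec_eq_iff zero_index)

lemma rv_upd:
  assumes "card e = 2" "v \<notin> e" shows "rv (p(v := w)) e i = rv p e i"
proof (cases "i \<in> e")
  case True
  then have "oth e i \<in> e" using card2_eq(3)[OF assms(1)] by blast
  then show ?thesis using True assms(2) by (auto simp: rv_def)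
qed (simp add: rv_def)

lemma ext0:
  fixes E :: "'v::finite set set"
  assumes "E = F \<union> T" "\<forall>e\<in>F. v \<notin> e" "\<forall>e\<in>T. v \<in> e" "indep F p"
    and cond: "\<And>\<omega>. (\<Sum>e\<in>T. \<omega> e *\<^sub>R rv p e v) = 0 \<Longrightarrow> (\<forall>e\<in>T. \<omega> e = 0)"
  shows "indep E p"
  unfolding indep_def
proof (intro allI impI)
  fix \<omega> assume eq: "eqs E p \<omega>"
  have disj: "F \<inter> T = {}" using assms(2,3) by blast
  have split: "(\<Sum>e\<in>E. \<omega> e *\<^sub>R rv p e i) = (\<Sum>e\<in>F. \<omega> e *\<^sub>R rv p e i) + (\<Sum>e\<in>T. \<omega> e *\<^sub>R rv p e i)" for i
    unfolding assms(1) by (rule sum.union_disjoint) (use disj in simp_all)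
  have "(\<Sum>e\<in>F. \<omega> e *\<^sub>R rv p e v) = 0"
    by (rule sum.neutral) (use assms(2) in \<open>simp add: rv_other\<close>)
  then have "(\<Sum>e\<in>T. \<omega> e *\<^sub>R rv p e v) = 0" using eq split[of v] unfolding eqs_def by simp
  then have T0: "\<forall>e\<in>T. \<omega> e = 0" by (rule cond)
  have "(\<Sum>e\<in>T. \<omega> e *\<^sub>R rv p e i) = 0" for i by (rule sum.neutral) (use T0 in simp)
  then have "eqs F p \<omega>" using eq split unfolding eqs_def by simp
  then have "\<forall>e\<in>F. \<omega> e = 0" using assms(4) unfolding indep_def by blast
  then show "\<forall>e\<in>E. \<omega> e = 0" using T0 assms(1) by blast
qed

lemma mid_lemma:
  fixes x1 x2 y1 y2 z1 z2 a b c :: real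
  assumes D: "(y1 - x1) * (z2 - x2) - (y2 - x2) * (z1 - x1) \<noteq> 0"
    and e1: "a * ((x1 + y1) / 2 - x1) + b * ((x1 + y1) / 2 - y1) + c * ((x1 + y1) / 2 - z1) = 0"
    and e2: "a * ((x2 + y2) / 2 - x2) + b * ((x2 + y2) / 2 - y2) + c * ((x2 + y2) / 2 - z2) = 0"
  shows "c = 0 \<and> a = b"
proof -
  have d: "(y1 - x1) * ((x2 + y2) / 2 - z2) - (y2 - x2) * ((x1 + y1) / 2 - z1) \<noteq> 0"
  proof -
    have "(y1 - x1) * ((x2 + y2) / 2 - z2) - (y2 - x2) * ((x1 + y1) / 2 - z1)
        = - ((y1 - x1) * (z2 - x2) - (y2 - x2) * (z1 - x1))" by (simp add: field_simps)
    then show ?thesis using D by simp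
  qed
  have f1: "((a - b) / 2) * (y1 - x1) + c * ((x1 + y1) / 2 - z1) = 0"
    using e1 by (simp add: field_simps)
  have f2: "((a - b) / 2) * (y2 - x2) + c * ((x2 + y2) / 2 - z2) = 0"
    using e2 by (simp add: field_simps)
  from lin2[OF d f1 f2] show ?thesis by simp
qed

lemma sum3:
  assumes "x \<noteq> y" "x \<noteq> z" "y \<noteq> z" "v \<noteq> x" "v \<noteq> y" "v \<noteq> z"
  shows "(\<Sum>e\<in>{{v, x}, {v, y}, {v, z}}. g e) = g {v, x} + g {v, y} + g {v, z}"
  using assms by (simp add: doubleton_eq_iff add.assoc)


lemma ext1:
  fixes E :: "'v::finite set set" and p :: "'v \<Rightarrow> real^2"
  assumes EF: "E = F \<union> {{v, x}, {v, y}, {v, z}}" and Fv: "\<forall>e\<in>F. v \<notin> e" and Fs: "simple_graph F"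
    and d: "x \<noteq> y" "x \<noteq> z" "y \<noteq> z" "v \<noteq> x" "v \<noteq> y" "v \<noteq> z"
    and xyF: "{x, y} \<notin> F" and ind: "indep (insert {x, y} F) p"
    and D: "det2 (p y - p x) (p z - p x) \<noteq> 0"
  shows "indep E (p(v := (1/2) *\<^sub>R (p x + p y)))"
  unfolding indep_def
proof (intro allI impI)
  define m where "m = (1/2) *\<^sub>R (p x + p y)"
  define q where "q = p(v := m)"
  fix \<omega> assume eq0: "eqs E (p(v := (1/2) *\<^sub>R (p x + p y))) \<omega>"
  then have eq: "eqs E q \<omega>" unfolding q_def m_def .
  let ?T = "{{v, x}, {v, y}, {v, z}}"
  have disj: "F \<inter> ?T = {}" using Fv by auto
  have split: "(\<Sum>e\<in>E. \<omega> e *\<^sub>R rv q e i) = (\<Sum>e\<in>F. \<omega> e *\<^sub>R rv q e i) + (\<Sum>e\<in>?T. \<omega> e *\<^sub>R rv q e i)" for i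
    unfolding EF by (rule sum.union_disjoint) (use disj in simp_all)
  have T3: "(\<Sum>e\<in>?T. \<omega> e *\<^sub>R rv q e i) = \<omega> {v,x} *\<^sub>R rv q {v,x} i + \<omega> {v,y} *\<^sub>R rv q {v,y} i + \<omega> {v,z} *\<^sub>R rv q {v,z} i" for i
    by (rule sum3) (use d in simp_all)
  have Frv: "rv q e i = rv p e i" if "e \<in> F" for e i
    unfolding q_def by (rule rv_upd) (use that Fs Fv in \<open>auto simp: simple_graph_def\<close>)
  have F0v: "(\<Sum>e\<in>F. \<omega> e *\<^sub>R rv q e v) = 0"
    by (rule sum.neutral) (use Fv in \<open>simp add: rv_other\<close>)
  have qv: "q v = m" "q x = p x" "q y = p y" "q z = p z" using d by (simp_all add: q_def)
  have atv: "\<omega> {v,x} *\<^sub>R (m - p x) + \<omega> {v,y} *\<^sub>R (m - p y) + \<omega> {v,z} *\<^sub>R (m - p z) = 0"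
    using eq unfolding eqs_def using split[of v] F0v T3[of v] d qv by (simp add: rv_pair1)
  have comp: "\<omega> {v,x} * ((p x $ k + p y $ k) / 2 - p x $ k) + \<omega> {v,y} * ((p x $ k + p y $ k) / 2 - p y $ k)
      + \<omega> {v,z} * ((p x $ k + p y $ k) / 2 - p z $ k) = 0" for k
    using arg_cong[OF atv, of "\<lambda>w. w $ k"] by (simp add: m_def add_divide_distrib)
  have "\<omega> {v,z} = 0 \<and> \<omega> {v,x} = \<omega> {v,y}"
    by (rule mid_lemma[OF _ comp[of 1] comp[of 2]]) (use D in \<open>simp add: det2_def\<close>)
  then have wz: "\<omega> {v,z} = 0" and wxy: "\<omega> {v,y} = \<omega> {v,x}" by auto
  define s where "s = \<omega> {v,x}"
  define \<omega>' where "\<omega>' = fun_upd \<omega> {x, y} (s / 2)"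
  have key: "(s / 2) *\<^sub>R rv p {x, y} i = s *\<^sub>R rv q {v,x} i + s *\<^sub>R rv q {v,y} i" for i
  proof -
    consider "i = v" | "i = x" | "i = y" | "i \<noteq> v" "i \<noteq> x" "i \<noteq> y" by blast
    then show ?thesis
    proof cases
      case 1
      have "rv q {v,x} v = m - p x" using d qv 1 by (simp add: rv_pair1)
      moreover have "rv q {v,y} v = m - p y" using d qv 1 by (simp add: rv_pair1)
      moreover have "rv p {x, y} v = 0" using d 1 by (simp add: rv_other)
      moreover have "(m - p x) + (m - p y) = 0" by (simp add: vec_eq_iff m_def field_simps)
      ultimately show ?thesis using 1 by (simp add: scaleR_add_right[symmetric])
    next
      case 2
      have "p x - m = (1/2) *\<^sub>R (p x - p y)" by (simp add: vec_eq_iff m_def field_simps)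
      then have "rv q {v,x} x = (1/2) *\<^sub>R (p x - p y)" using d qv 2 by (simp add: rv_pair2)
      moreover have "rv q {v,y} x = 0" using d 2 by (simp add: rv_other)
      moreover have "rv p {x, y} x = p x - p y" using d 2 by (simp add: rv_pair1)
      ultimately show ?thesis using 2 by simp
    next
      case 3
      have "p y - m = (1/2) *\<^sub>R (p y - p x)" by (simp add: vec_eq_iff m_def field_simps)
      then have "rv q {v,y} y = (1/2) *\<^sub>R (p y - p x)" using d qv 3 by (simp add: rv_pair2)
      moreover have "rv q {v,x} y = 0" using d 3 by (simp add: rv_other)
      moreover have "rv p {x, y} y = p y - p x" using d 3 by (simp add: rv_pair2)
      ultimately show ?thesis using 3 by simp
    next
      case 4
      then show ?thesis by (simp add: rv_other)
    qed
  qed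
  have "eqs (insert {x, y} F) p \<omega>'"
    unfolding eqs_def
  proof
    fix i
    have "(\<Sum>e\<in>insert {x, y} F. \<omega>' e *\<^sub>R rv p e i) = \<omega>' {x,y} *\<^sub>R rv p {x,y} i + (\<Sum>e\<in>F. \<omega>' e *\<^sub>R rv p e i)"
      by (rule sum.insert) (use xyF in simp_all)
    also have "(\<Sum>e\<in>F. \<omega>' e *\<^sub>R rv p e i) = (\<Sum>e\<in>F. \<omega> e *\<^sub>R rv q e i)"
      by (rule sum.cong) (use xyF Frv in \<open>auto simp: \<omega>'_def\<close>)
    also have "\<omega>' {x,y} *\<^sub>R rv p {x,y} i = s *\<^sub>R rv q {v,x} i + s *\<^sub>R rv q {v,y} i"
      using key by (simp add: \<omega>'_def)
    also have "s *\<^sub>R rv q {v,x} i + s *\<^sub>R rv q {v,y} i = (\<Sum>e\<in>?T. \<omega> e *\<^sub>R rv q e i)"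
      unfolding T3 by (simp add: wz wxy s_def)
    finally show "(\<Sum>e\<in>insert {x, y} F. \<omega>' e *\<^sub>R rv p e i) = 0"
      using eq split[of i] unfolding eqs_def by (simp add: add.commute)
  qed
  then have z: "\<forall>e\<in>insert {x, y} F. \<omega>' e = 0" using ind unfolding indep_def by blast
  then have "s = 0" by (simp add: \<omega>'_def)
  have "\<omega> e = 0" if "e \<in> F" for e
    using z that xyF by (auto simp: \<omega>'_def split: if_splits)
  then show "\<forall>e\<in>E. \<omega> e = 0" using \<open>s = 0\<close> wz wxy unfolding EF s_def by auto
qed


lemma indep_empty: "indep {} p" unfolding indep_def by simp

theorem indep_sparse:
  fixes p :: "'v::finite \<Rightarrow> real^2"
  assumes gen: "generic p"
  shows "simple_graph E \<Longrightarrow> laman_sparse E \<Longrightarrow> indep E p"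
proof (induction "card E" arbitrary: E rule: less_induct)
  case less
  show ?case
  proof (cases "E = {}")
    case True then show ?thesis by (simp add: indep_empty)
  next
    case False
    obtain v where deg: "1 \<le> card {e\<in>E. v \<in> e}" "card {e\<in>E. v \<in> e} \<le> 3"
      using low_degree[OF less.prems False] by blast
    define T where "T = {e\<in>E. v \<in> e}"
    define F where "F = {e\<in>E. v \<notin> e}"
    have EFT: "E = F \<union> T" unfolding F_def T_def by auto
    have disj: "F \<inter> T = {}" unfolding F_def T_def by auto
    have Fv: "\<forall>e\<in>F. v \<notin> e" and Tv: "\<forall>e\<in>T. v \<in> e" unfolding F_def T_def by auto
    have cE: "card E = card F + card T" unfolding EFT by (rule card_Un_disjoint) (use disj in simp_all)
    have FE: "F \<subseteq> E" unfolding F_def by auto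
    have Fs: "simple_graph F" by (rule simple_subset[OF less.prems(1) FE])
    have Fsp: "laman_sparse F" by (rule sparse_subset[OF less.prems(2) FE])
    have "card F < card E" using cE deg unfolding T_def by simp
    then have indF: "indep F p" using less.hyps Fs Fsp by blast
    have Tc: "card e = 2" if "e \<in> T" for e using that less.prems(1) unfolding T_def simple_graph_def by auto
    have Tpair: "e = {v, oth e v}" "oth e v \<noteq> v" if "e \<in> T" for e
      using card2_eq[OF Tc[OF that]] Tv that by auto
    consider "card T = 1" | "card T = 2" | "card T = 3" using deg unfolding T_def by linarith
    then show ?thesis
    proof cases
      case 1
      then obtain e1 where T1: "T = {e1}" using card_1_singleton_iff by (metis One_nat_def)
      define a where "a = oth e1 v"
      have e1: "e1 = {v, a}" "a \<noteq> v" using Tpair[of e1] T1 by (auto simp: a_def)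
      show ?thesis
      proof (rule ext0[OF EFT Fv Tv indF])
        fix \<omega> :: "'v set \<Rightarrow> real" assume "(\<Sum>e\<in>T. \<omega> e *\<^sub>R rv p e v) = 0"
        then have "\<omega> e1 *\<^sub>R (p v - p a) = 0" using e1 T1 by (simp add: rv_pair1)
        moreover have "p v \<noteq> p a" using generic_distinct[OF gen] e1 by metis
        ultimately show "\<forall>e\<in>T. \<omega> e = 0" using T1 by simp
      qed
    next
      case 2
      then obtain e1 e2 where T2: "T = {e1, e2}" "e1 \<noteq> e2" using card_2_iff by metis
      define a where "a = oth e1 v"
      define b where "b = oth e2 v"
      have e1: "e1 = {v, a}" "a \<noteq> v" using Tpair[of e1] T2 by (auto simp: a_def)
      have e2: "e2 = {v, b}" "b \<noteq> v" using Tpair[of e2] T2 by (auto simp: b_def)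
      have ab: "a \<noteq> b" using e1 e2 T2 by auto
      have D: "det2 (p a - p v) (p b - p v) \<noteq> 0" using generic_det2[OF gen] e1 e2 ab by metis
      show ?thesis
      proof (rule ext0[OF EFT Fv Tv indF])
        fix \<omega> :: "'v set \<Rightarrow> real" assume "(\<Sum>e\<in>T. \<omega> e *\<^sub>R rv p e v) = 0"
        then have eqv: "\<omega> e1 *\<^sub>R (p v - p a) + \<omega> e2 *\<^sub>R (p v - p b) = 0"
          using e1 e2 T2 by (simp add: rv_pair1)
        have c: "\<omega> e1 * (p v $ k - p a $ k) + \<omega> e2 * (p v $ k - p b $ k) = 0" for k
          using arg_cong[OF eqv, of "\<lambda>w. w $ k"] by simp
        have "\<omega> e1 = 0 \<and> \<omega> e2 = 0"
        proof (rule lin2[OF _ c[of 1] c[of 2]])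
          show "(p v $ 1 - p a $ 1) * (p v $ 2 - p b $ 2) - (p v $ 2 - p a $ 2) * (p v $ 1 - p b $ 1) \<noteq> 0"
            using D unfolding det2_def by (simp add: algebra_simps)
        qed
        then show "\<forall>e\<in>T. \<omega> e = 0" using T2 by simp
      qed
    next
      case 3
      then obtain e1 e2 e3 where T3: "T = {e1, e2, e3}" "e1 \<noteq> e2" "e2 \<noteq> e3" "e1 \<noteq> e3"
        using card_3_iff by metis
      define a where "a = oth e1 v"
      define b where "b = oth e2 v"
      define c where "c = oth e3 v"
      have e1: "e1 = {v, a}" "a \<noteq> v" using Tpair[of e1] T3 by (auto simp: a_def)
      have e2: "e2 = {v, b}" "b \<noteq> v" using Tpair[of e2] T3 by (auto simp: b_def)
      have e3: "e3 = {v, c}" "c \<noteq> v" using Tpair[of e3] T3 by (auto simp: c_def)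
      have dist: "a \<noteq> b" "b \<noteq> c" "a \<noteq> c" using e1 e2 e3 T3 by auto
      have star: "{e\<in>E. v \<in> e} = {{v, a}, {v, b}, {v, c}}" using T3 e1 e2 e3 unfolding T_def by simp
      interpret X: ext1_setup E v a b c
        by unfold_locales (use less.prems star dist e1 e2 e3 in auto)
      have XF: "X.F = F" unfolding X.F_def F_def ..
      obtain x y z where xyz: "{x, y, z} = {a, b, c}" "x \<noteq> y" "x \<noteq> z" "y \<noteq> z" "{x, y} \<notin> E"
        "laman_sparse (insert {x, y} F)"
        using X.ext1_pair unfolding XF by blast
      have xyzv: "x \<noteq> v" "y \<noteq> v" "z \<noteq> v"
      proof -
        have "x \<in> {a,b,c}" "y \<in> {a,b,c}" "z \<in> {a,b,c}" by (subst xyz(1)[symmetric], simp)+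
        then show "x \<noteq> v" "y \<noteq> v" "z \<noteq> v" using e1 e2 e3 by auto
      qed
      have xyF: "{x, y} \<notin> F" using xyz(5) FE by blast
      define F' where "F' = insert {x, y} F"
      have cF': "card F' = card F + 1" unfolding F'_def using xyF by simp
      have "card F' < card E" using cF' cE 3 by simp
      moreover have "simple_graph F'" using Fs xyz(2) unfolding F'_def simple_graph_def by simp
      ultimately have indF': "indep F' p" using less.hyps xyz(6) unfolding F'_def by blast
      have Teq: "T = {{v, x}, {v, y}, {v, z}}"
      proof -
        have "T = (\<lambda>w. {v, w}) ` {a, b, c}" using T3 e1 e2 e3 by simp
        also have "\<dots> = (\<lambda>w. {v, w}) ` {x, y, z}" using xyz(1) by simp
        finally show ?thesis by simp
      qed
      have D: "det2 (p y - p x) (p z - p x) \<noteq> 0" using generic_det2[OF gen xyz(2,3,4)] .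
      have "indep E (p(v := (1/2) *\<^sub>R (p x + p y)))"
        by (rule ext1[OF _ Fv Fs xyz(2,3,4) xyzv(1,2,3)[symmetric] xyF indF'[unfolded F'_def] D])
          (use EFT Teq in simp)
      then show ?thesis by (rule indep_transfer[OF gen])
    qed
  qed
qed


definition ea :: "'v set \<Rightarrow> 'v" where "ea e = (SOME i. i \<in> e)"
definition eb :: "'v set \<Rightarrow> 'v" where "eb e = oth e (ea e)"

lemma ea_eb:
  assumes "card e = 2" shows "ea e \<in> e" "eb e \<in> e" "ea e \<noteq> eb e" "e = {ea e, eb e}"
proof -
  have ne: "e \<noteq> {}" using assms by auto
  show a: "ea e \<in> e" unfolding ea_def using ne by (simp add: some_in_eq)
  show "eb e \<in> e" "ea e \<noteq> eb e" "e = {ea e, eb e}" unfolding eb_def using card2_eq[OF assms a] by auto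
qed

definition Phi :: "'v::finite set set \<Rightarrow> (real^2^'v) \<times> (real^('v set)) \<Rightarrow> real^('v set)" where
  "Phi E x = (\<chi> e. if e \<in> E then (fst x $ ea e - fst x $ eb e) \<bullet> (fst x $ ea e - fst x $ eb e) else snd x $ e)"

definition Phi' :: "'v::finite set set \<Rightarrow> (real^2^'v) \<times> (real^('v set)) \<Rightarrow> (real^2^'v) \<times> (real^('v set)) \<Rightarrow> real^('v set)" where
  "Phi' E x h = (\<chi> e. if e \<in> E then 2 * ((fst x $ ea e - fst x $ eb e) \<bullet> (fst h $ ea e - fst h $ eb e)) else snd h $ e)"

lemma Phi_deriv:
  fixes E :: "'v::finite set set"
  shows "(Phi E has_derivative Phi' E x) (at x)"
proof -
  have "((\<lambda>x. Phi E x $ e) has_derivative (\<lambda>h. Phi' E x h $ e)) (at x)" for e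
  proof (cases "e \<in> E")
    case True
    define g where "g = (\<lambda>x::(real^2^'v) \<times> (real^('v set)). fst x $ ea e - fst x $ eb e)"
    have bl: "bounded_linear g" unfolding g_def
      by (intro bounded_linear_sub bounded_linear_compose[OF bounded_linear_vec_nth bounded_linear_fst])
    have gd: "(g has_derivative g) (at x)" using bounded_linear.has_derivative[OF bl has_derivative_ident] by simp
    have "((\<lambda>x. g x \<bullet> g x) has_derivative (\<lambda>h. g x \<bullet> g h + g h \<bullet> g x)) (at x)"
      by (rule has_derivative_inner[OF gd gd])
    moreover have "(\<lambda>h. g x \<bullet> g h + g h \<bullet> g x) = (\<lambda>h. Phi' E x h $ e)"
      using True by (auto simp: Phi'_def g_def inner_commute)
    moreover have "(\<lambda>x. g x \<bullet> g x) = (\<lambda>x. Phi E x $ e)"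
      using True by (auto simp: Phi_def g_def)
    ultimately show ?thesis by simp
  next
    case False
    have bl: "bounded_linear (\<lambda>x::(real^2^'v) \<times> (real^('v set)). snd x $ e)"
      by (rule bounded_linear_compose[OF bounded_linear_vec_nth bounded_linear_snd])
    have "((\<lambda>x. snd x $ e) has_derivative (\<lambda>h. snd h $ e)) (at x)"
      using bounded_linear.has_derivative[OF bl has_derivative_ident] by simp
    then show ?thesis unfolding Phi_def Phi'_def using False by simp
  qed
  then show ?thesis
    using has_derivative_componentwise_within[of "Phi E" "Phi' E x" x UNIV]
    by (auto simp: Basis_vec_def inner_axis)
qed


lemma edge_inner:
  fixes p :: "'v::finite \<Rightarrow> real^2"
  assumes "card f = 2"
  shows "(p (ea f) - p (eb f)) \<bullet> (h (ea f) - h (eb f)) = (\<Sum>i\<in>UNIV. rv p f i \<bullet> h i)"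
proof -
  define a where "a = ea f"
  define b where "b = eb f"
  have ab: "a \<noteq> b" "f = {a, b}" using ea_eb[OF assms] by (auto simp: a_def b_def)
  have "(\<Sum>i\<in>UNIV. rv p f i \<bullet> h i) = (\<Sum>i\<in>{a, b}. rv p f i \<bullet> h i)"
    by (rule sum.mono_neutral_right) (auto simp: rv_other ab(2))
  also have "\<dots> = rv p f a \<bullet> h a + rv p f b \<bullet> h b" using ab by simp
  also have "\<dots> = (p a - p b) \<bullet> h a + (p b - p a) \<bullet> h b"
    using ab by (simp add: rv_pair1 rv_pair2)
  also have "\<dots> = (p a - p b) \<bullet> (h a - h b)" by (simp add: algebra_simps inner_diff_left inner_diff_right)
  finally show ?thesis by (simp add: a_def b_def)
qed

lemma Phi'_surj:
  fixes E :: "'v::finite set set" and p :: "'v \<Rightarrow> real^2"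
  assumes simple: "simple_graph E" and ind: "indep E p"
  shows "surj (Phi' E ((\<chi> i. p i), z))"
proof (rule ccontr)
  define L where "L = Phi' E ((\<chi> i. p i), z)"
  assume ns: "\<not> surj (Phi' E ((\<chi> i. p i), z))"
  have lin: "linear L" unfolding L_def by (rule has_derivative_linear[OF Phi_deriv])
  have sub: "subspace (range L)" by (rule linear_subspace_image[OF lin subspace_UNIV])
  have "dim (range L) \<noteq> DIM(real^('v set))"
  proof
    assume "dim (range L) = DIM(real^('v set))"
    then have "span (range L) = UNIV" using dim_eq_full[of "range L"] by blast
    then have "range L = UNIV" using sub span_eq_iff[of "range L"] by simp
    then show False using ns unfolding L_def by simp
  qed
  then have "dim (range L) < DIM(real^('v set))" using dim_subset_UNIV[of "range L"] by linarith
  then obtain y :: "real^('v set)" where y0: "y \<noteq> 0" and orth: "\<And>w. w \<in> span (range L) \<Longrightarrow> orthogonal y w"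
    using orthogonal_to_subspace_exists by blast
  have yL: "y \<bullet> L h = 0" for h using orth[of "L h"] by (simp add: span_base orthogonal_def)
  have yL': "(\<Sum>f\<in>UNIV. y $ f * L h $ f) = 0" for h using yL[of h] by (simp add: inner_vec_def)
  have outE: "y $ e = 0" if "e \<notin> E" for e
  proof -
    have "L (0, axis e 1) = axis e 1"
      using that by (auto simp: L_def Phi'_def vec_eq_iff axis_def)
    then show ?thesis using yL[of "(0, axis e 1)"] by (simp add: inner_axis)
  qed
  define S where "S i = (\<Sum>f\<in>E. y $ f *\<^sub>R rv p f i)" for i
  define h where "h = ((\<chi> i. S i) :: real^2^'v, 0 :: real^('v set))"
  have Lh: "L h $ f = (if f \<in> E then 2 * (\<Sum>i\<in>UNIV. rv p f i \<bullet> S i) else 0)" for f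
  proof (cases "f \<in> E")
    case True
    then have c: "card f = 2" using simple unfolding simple_graph_def by auto
    show ?thesis using True edge_inner[OF c, of p S] by (simp add: L_def Phi'_def h_def)
  qed (simp add: L_def Phi'_def h_def)
  have "0 = (\<Sum>f\<in>UNIV. y $ f * L h $ f)" using yL' by simp
  also have "\<dots> = (\<Sum>f\<in>E. y $ f * (2 * (\<Sum>i\<in>UNIV. rv p f i \<bullet> S i)))"
    by (rule sum.mono_neutral_cong_right) (auto simp: Lh)
  also have "\<dots> = 2 * (\<Sum>f\<in>E. \<Sum>i\<in>UNIV. (y $ f *\<^sub>R rv p f i) \<bullet> S i)"
    by (simp add: sum_distrib_left algebra_simps)
  also have "(\<Sum>f\<in>E. \<Sum>i\<in>UNIV. (y $ f *\<^sub>R rv p f i) \<bullet> S i) = (\<Sum>i\<in>UNIV. \<Sum>f\<in>E. (y $ f *\<^sub>R rv p f i) \<bullet> S i)"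
    by (rule sum.swap)
  also have "\<dots> = (\<Sum>i\<in>UNIV. S i \<bullet> S i)"
  proof (intro sum.cong refl)
    fix i
    show "(\<Sum>f\<in>E. (y $ f *\<^sub>R rv p f i) \<bullet> S i) = S i \<bullet> S i"
      unfolding inner_sum_left[symmetric] S_def[of i, symmetric] ..
  qed
  finally have "(\<Sum>i\<in>UNIV. S i \<bullet> S i) = 0" by simp
  then have "\<forall>i\<in>UNIV. S i \<bullet> S i = 0" by (subst (asm) sum_nonneg_eq_0_iff) auto
  then have "eqs E p (\<lambda>f. y $ f)" unfolding eqs_def S_def by simp
  then have "\<forall>e\<in>E. y $ e = 0" using ind unfolding indep_def by blast
  then have "y = 0" using outE by (auto simp: vec_eq_iff)
  with y0 show False by simp
qed


lemma perturbed:
  fixes E :: "'v::finite set set" and p :: "'v \<Rightarrow> real^2"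
  assumes simple: "simple_graph E" and ind: "indep E p"
  shows "\<exists>c>0. \<exists>P' :: real^2^'v. \<forall>e\<in>E.
     (P' $ ea e - P' $ eb e) \<bullet> (P' $ ea e - P' $ eb e) = (p (ea e) - p (eb e)) \<bullet> (p (ea e) - p (eb e)) - c"
proof -
  define x0 where "x0 = ((\<chi> i. p i) :: real^2^'v, 0 :: real^('v set))"
  define L where "L = Phi' E x0"
  have surj: "surj L" unfolding L_def x0_def by (rule Phi'_surj[OF simple ind])
  have lin: "linear L" unfolding L_def by (rule has_derivative_linear[OF Phi_deriv])
  obtain g where g: "linear g" "L \<circ> g = id"
    using real_vector.linear_surjective_right_inverse[OF lin surj] by blast
  have bg: "bounded_linear g" using g(1) linear_conv_bounded_linear by blast
  have cont: "continuous_on UNIV (Phi E)"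
    by (rule continuous_at_imp_continuous_on) (use has_derivative_continuous[OF Phi_deriv] in blast)
  have "Phi E x0 \<in> interior (Phi E ` UNIV)"
    by (rule sussmann_open_mapping[OF open_UNIV cont _ Phi_deriv bg g(2)[unfolded L_def]]) simp_all
  then obtain \<epsilon> where \<epsilon>: "\<epsilon> > 0" "ball (Phi E x0) \<epsilon> \<subseteq> range (Phi E)"
    unfolding mem_interior by blast
  define w :: "real^('v set)" where "w = (\<chi> e. if e \<in> E then 1 else 0)"
  define c where "c = \<epsilon> / (2 * (norm w + 1))"
  have c0: "c > 0" using \<epsilon>(1) unfolding c_def by (intro divide_pos_pos) (auto intro: add_nonneg_pos)
  have "c * norm w < \<epsilon>"
  proof -
    have "c * norm w \<le> c * (norm w + 1)" using c0 by simp
    also have "\<dots> = \<epsilon> / 2"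
    proof -
      have "norm w + 1 \<noteq> 0" by (metis add_nonneg_pos norm_ge_zero zero_less_one less_irrefl)
      then show ?thesis unfolding c_def by (simp add: field_simps)
    qed
    finally show ?thesis using \<epsilon>(1) by simp
  qed
  then have "Phi E x0 - c *\<^sub>R w \<in> ball (Phi E x0) \<epsilon>" using c0 by (simp add: dist_norm)
  then have "Phi E x0 - c *\<^sub>R w \<in> range (Phi E)" using \<epsilon>(2) by blast
  then obtain x1 where x1: "Phi E x1 = Phi E x0 - c *\<^sub>R w" by (metis rangeE)
  have "\<forall>e\<in>E. (fst x1 $ ea e - fst x1 $ eb e) \<bullet> (fst x1 $ ea e - fst x1 $ eb e)
      = (p (ea e) - p (eb e)) \<bullet> (p (ea e) - p (eb e)) - c"
  proof
    fix e assume e: "e \<in> E"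
    have "Phi E x1 $ e = Phi E x0 $ e - c" using x1 e by (simp add: w_def)
    then show "(fst x1 $ ea e - fst x1 $ eb e) \<bullet> (fst x1 $ ea e - fst x1 $ eb e)
      = (p (ea e) - p (eb e)) \<bullet> (p (ea e) - p (eb e)) - c"
      using e by (simp add: Phi_def x0_def)
  qed
  then show ?thesis using c0 by blast
qed


lemma sym_quad:
  fixes Y :: "real^'n::finite^'n"
  assumes "transpose Y = Y" "Y *v (1::real^'n) = 0"
  shows "x \<bullet> (Y *v x) = (x - t *\<^sub>R (1::real^_)) \<bullet> (Y *v (x - t *\<^sub>R (1::real^_)))"
proof -
  define x0 where "x0 = x - t *\<^sub>R (1::real^_)"
  have x: "x = x0 + t *\<^sub>R (1::real^_)" unfolding x0_def by simp
  have Yx: "Y *v x = Y *v x0" unfolding x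
    by (simp add: matrix_vector_right_distrib matrix_scaleR_vector_ac assms(2) scaleR_matrix_vector_assoc[symmetric])
  have "(1::real^_) \<bullet> (Y *v x0) = ((1::real^_) v* Y) \<bullet> x0" by (simp add: dot_lmul_matrix)
  also have "(1::real^_) v* Y = Y *v (1::real^_)" by (metis assms(1) vector_transpose_matrix)
  finally have z: "(1::real^_) \<bullet> (Y *v x0) = 0" using assms(2) by simp
  have "x \<bullet> (Y *v x) = x0 \<bullet> (Y *v x0) + t * ((1::real^_) \<bullet> (Y *v x0))"
    unfolding Yx by (subst x) (simp add: inner_add_left)
  then show ?thesis using z by (simp add: x0_def)
qed

lemma sum_vec1: "(1::real^'n::finite) \<bullet> x = (\<Sum>i\<in>UNIV. x $ i)"
  by (simp add: inner_vec_def)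

lemma inner_vec1_self: "(1::real^'n::finite) \<bullet> 1 = real CARD('n)"
  by (simp add: inner_vec_def)

locale construction =
  fixes P' :: "real^2^'v::finite" and s :: real
  assumes s_pos: "s > 0"
begin

definition n :: real where "n = real CARD('v)"
definition m :: "real^2" where "m = (1 / n) *\<^sub>R (\<Sum>j\<in>UNIV. P' $ j)"
definition Q :: "'v \<Rightarrow> real^2" where "Q i = P' $ i - m"
definition A :: "real^'v^'v" where "A = (\<chi> i j. Q i \<bullet> Q j)"
definition C :: "real^'v^'v" where "C = (\<chi> i j. (if i = j then 1 else 0) - 1 / n)"
definition X :: "real^'v^'v" where "X = A + s *\<^sub>R C"

lemma n_pos: "n > 0" unfolding n_def by simp

lemma sumQ: "(\<Sum>j\<in>UNIV. Q j) = 0"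
proof -
  have "(\<Sum>j\<in>UNIV. Q j) = (\<Sum>j\<in>UNIV. P' $ j) - n *\<^sub>R m" unfolding Q_def by (simp add: sum_subtractf n_def sum_constant_scaleR del: sum_constant)
  also have "n *\<^sub>R m = (\<Sum>j\<in>UNIV. P' $ j)" unfolding m_def using n_pos by simp
  finally show ?thesis by simp
qed

lemma A_sym: "transpose A = A" unfolding A_def transpose_def by (simp add: inner_commute)
lemma C_sym: "transpose C = C" unfolding C_def transpose_def by (auto simp: vec_eq_iff)
lemma X_sym: "transpose X = X" unfolding X_def
  using A_sym C_sym by (simp add: transpose_def vec_eq_iff)

lemma A1: "A *v (1::real^_) = 0"
proof -
  have "(A *v (1::real^_)) $ i = Q i \<bullet> (\<Sum>j\<in>UNIV. Q j)" for i
    by (simp add: A_def matrix_vector_mult_def inner_sum_right)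
  then show ?thesis by (simp add: vec_eq_iff sumQ)
qed

lemma C1: "C *v (1::real^_) = 0"
proof -
  have "(C *v (1::real^_)) $ i = 1 - real CARD('v) / n" for i
    by (simp add: C_def matrix_vector_mult_def sum_subtractf)
  then show ?thesis using n_pos by (simp add: vec_eq_iff n_def)
qed

lemma X1: "X *v (1::real^_) = 0" unfolding X_def
  by (simp add: matrix_vector_mult_add_rdistrib A1 scaleR_matrix_vector_assoc[symmetric] C1)

lemma A_quad: "x \<bullet> (A *v x) = (\<Sum>i\<in>UNIV. x $ i *\<^sub>R Q i) \<bullet> (\<Sum>i\<in>UNIV. x $ i *\<^sub>R Q i)"
proof -
  have Ax: "(A *v x) $ i = (\<Sum>j\<in>UNIV. (Q i \<bullet> Q j) * x $ j)" for i
    by (simp add: A_def matrix_vector_mult_def)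
  have "x \<bullet> (A *v x) = (\<Sum>i\<in>UNIV. x $ i * (A *v x) $ i)" by (simp add: inner_vec_def)
  also have "\<dots> = (\<Sum>i\<in>UNIV. \<Sum>j\<in>UNIV. (x $ i *\<^sub>R Q i) \<bullet> (x $ j *\<^sub>R Q j))"
    unfolding Ax by (simp add: sum_distrib_left mult_ac)
  also have "\<dots> = (\<Sum>i\<in>UNIV. x $ i *\<^sub>R Q i) \<bullet> (\<Sum>i\<in>UNIV. x $ i *\<^sub>R Q i)"
    by (simp only: inner_sum_left inner_sum_right) (rule sum.swap)
  finally show ?thesis .
qed

lemma A_nonneg: "x \<bullet> (A *v x) \<ge> 0" unfolding A_quad by simp

lemma C_quad: "x \<bullet> (C *v x) = x \<bullet> x - ((1::real^'v) \<bullet> x)^2 / n"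
proof -
  have "(C *v x) $ i = x $ i - ((1::real^'v) \<bullet> x) / n" for i
  proof -
    have "(C *v x) $ i = (\<Sum>j\<in>UNIV. (if i = j then x $ j else 0) - x $ j / n)"
      unfolding C_def matrix_vector_mult_def vec_lambda_beta by (intro sum.cong refl) (simp add: algebra_simps)
    also have "\<dots> = x $ i - (\<Sum>j\<in>UNIV. x $ j) / n"
      by (simp add: sum_subtractf sum_divide_distrib)
    finally show ?thesis by (simp add: sum_vec1)
  qed
  then have "C *v x = x - (((1::real^'v) \<bullet> x) / n) *\<^sub>R 1" by (simp add: vec_eq_iff)
  then show ?thesis by (simp add: inner_diff_right power2_eq_square inner_commute)
qed

lemma C_nonneg: "x \<bullet> (C *v x) \<ge> 0"
proof -
  define t where "t = ((1::real^_) \<bullet> x) / n"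
  have "x \<bullet> (C *v x) = (x - t *\<^sub>R (1::real^_)) \<bullet> (C *v (x - t *\<^sub>R (1::real^_)))"
    by (rule sym_quad[OF C_sym C1])
  also have "(1::real^_) \<bullet> (x - t *\<^sub>R (1::real^_)) = 0"
    using n_pos by (simp add: inner_diff_right inner_vec1_self t_def n_def[symmetric] inner_commute)
  then have "(x - t *\<^sub>R (1::real^_)) \<bullet> (C *v (x - t *\<^sub>R (1::real^_))) = (x - t *\<^sub>R (1::real^_)) \<bullet> (x - t *\<^sub>R (1::real^_))"
    by (simp add: C_quad)
  finally show ?thesis by simp
qed

lemma X_quad: "x \<bullet> (X *v x) = x \<bullet> (A *v x) + s * (x \<bullet> (C *v x))"
  unfolding X_def by (simp add: matrix_vector_mult_add_rdistrib scaleR_matrix_vector_assoc[symmetric] inner_add_right)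

lemma X_psd: "psd X"
  unfolding psd_def using X_sym X_quad A_nonneg C_nonneg s_pos by (simp add: add_nonneg_nonneg)

lemma X_strict: "(1::real^_) \<bullet> x = 0 \<Longrightarrow> x \<bullet> (X *v x) \<ge> s * (x \<bullet> x)"
  using X_quad[of x] A_nonneg[of x] C_quad[of x] by simp

end


context construction
begin

lemma X_entry: "X $ i $ j = Q i \<bullet> Q j + s * ((if i = j then 1 else 0) - 1 / n)"
  by (simp add: X_def A_def C_def)

lemma X_Kmap: "i \<noteq> j \<Longrightarrow> Kmap X i j = (P' $ i - P' $ j) \<bullet> (P' $ i - P' $ j) + 2 * s"
  by (simp add: Kmap_def X_entry Q_def inner_diff_left inner_diff_right inner_commute algebra_simps)

lemma X_face: "X \<in> centred_face"
  unfolding centred_face_def using X_psd X1 by simp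

lemma hyp_dim: "dim {y::real^'v. 1 \<bullet> y = 0} = CARD('v) - 1"
  using dim_hyperplane[of "1::real^'v"] by simp

lemma X_rank: "rank X = CARD('v) - 1"
proof -
  define H where "H = {y::real^'v. 1 \<bullet> y = 0}"
  have subH: "subspace H" unfolding H_def by (rule subspace_hyperplane)
  have rng: "range ((*v) X) \<subseteq> H"
  proof
    fix y assume "y \<in> range ((*v) X)"
    then obtain x where y: "y = X *v x" by blast
    have "(1::real^'v) \<bullet> (X *v x) = ((1::real^'v) v* X) \<bullet> x" by (simp add: dot_lmul_matrix)
    also have "(1::real^'v) v* X = X *v 1" by (metis X_sym vector_transpose_matrix)
    finally show "y \<in> H" using X1 y by (simp add: H_def)
  qed
  have inj: "inj_on ((*v) X) H"
  proof (rule inj_onI)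
    fix x y assume xy: "x \<in> H" "y \<in> H" "X *v x = X *v y"
    define z where "z = x - y"
    have zH: "(1::real^'v) \<bullet> z = 0" using xy(1,2) by (simp add: H_def z_def inner_diff_right)
    have "X *v z = 0" using xy(3) by (simp add: z_def matrix_vector_mult_diff_distrib)
    then have "s * (z \<bullet> z) \<le> 0" using X_strict[OF zH] by simp
    then have "z \<bullet> z \<le> 0" using s_pos by (simp add: mult_le_0_iff)
    then have "z \<bullet> z = 0" using inner_ge_zero[of z] by linarith
    then have "z = 0" by simp
    then show "x = y" by (simp add: z_def)
  qed
  have lin: "linear ((*v) X)" by (rule matrix_vector_mul_linear)
  have spH: "span H = H" using subH by simp
  have inj': "inj_on ((*v) X) (span H)" using inj unfolding spH .
  have "dim ((*v) X ` H) = dim H" by (rule dim_image_eq[OF lin inj'])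
  moreover have "dim ((*v) X ` H) \<le> dim (range ((*v) X))" by (rule dim_subset) auto
  moreover have "dim (range ((*v) X)) \<le> dim H" by (rule dim_subset[OF rng])
  ultimately have "dim (range ((*v) X)) = dim H" by linarith
  then show ?thesis using hyp_dim unfolding H_def rank_dim_range by simp
qed

lemma L0_subspace: "subspace {Y::real^'v^'v. transpose Y = Y \<and> Y *v 1 = 0}"
  unfolding subspace_def
  by (auto simp: transpose_def vec_eq_iff matrix_vector_mult_add_rdistrib
      scaleR_matrix_vector_assoc[symmetric])

lemma entry_le_norm: "\<bar>B $ i $ j\<bar> \<le> norm (B :: real^'v^'v)"
proof -
  have "\<bar>B $ i $ j\<bar> \<le> norm (B $ i)" by (rule component_le_norm_cart)
  moreover have "norm (B $ i) \<le> norm B" by (rule Finite_Cartesian_Product.norm_nth_le)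
  ultimately show ?thesis by linarith
qed

lemma near_psd:
  fixes Y :: "real^'v^'v"
  assumes Ysym: "transpose Y = Y" and Y1: "Y *v 1 = 0" and close: "n * n * norm (Y - X) \<le> s"
  shows "psd Y"
  unfolding psd_def
proof (intro conjI allI)
  show "transpose Y = Y" by (rule Ysym)
  fix x :: "real^'v"
  define t where "t = ((1::real^'v) \<bullet> x) / n"
  define x0 where "x0 = x - t *\<^sub>R 1"
  have x01: "(1::real^'v) \<bullet> x0 = 0"
    using n_pos by (simp add: x0_def inner_diff_right inner_vec1_self t_def n_def[symmetric] inner_commute)
  have q: "x \<bullet> (Y *v x) = x0 \<bullet> (Y *v x0)" unfolding x0_def by (rule sym_quad[OF Ysym Y1])
  have split: "x0 \<bullet> (Y *v x0) = x0 \<bullet> (X *v x0) + x0 \<bullet> ((Y - X) *v x0)"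
    by (simp add: matrix_vector_mult_diff_rdistrib inner_diff_right)
  have b1: "x0 \<bullet> (X *v x0) \<ge> s * (x0 \<bullet> x0)" by (rule X_strict[OF x01])
  have on: "onorm ((*v) (Y - X)) \<le> real CARD('v) * real CARD('v) * norm (Y - X)"
    by (rule onorm_le_matrix_component) (rule entry_le_norm)
  have "\<bar>x0 \<bullet> ((Y - X) *v x0)\<bar> \<le> norm x0 * norm ((Y - X) *v x0)" by (rule Cauchy_Schwarz_ineq2)
  also have "norm ((Y - X) *v x0) \<le> onorm ((*v) (Y - X)) * norm x0"
    by (rule onorm[OF matrix_vector_mul_bounded_linear])
  then have "norm x0 * norm ((Y - X) *v x0) \<le> norm x0 * (onorm ((*v) (Y - X)) * norm x0)"
    by (simp add: mult_left_mono)
  also have "\<dots> \<le> norm x0 * (s * norm x0)"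
  proof -
    have "onorm ((*v) (Y - X)) \<le> s" using on close by (simp add: n_def)
    then show ?thesis by (simp add: mult_left_mono mult_right_mono)
  qed
  finally have "\<bar>x0 \<bullet> ((Y - X) *v x0)\<bar> \<le> s * (x0 \<bullet> x0)"
    by (simp add: dot_square_norm power2_eq_square mult_ac)
  then show "0 \<le> x \<bullet> (Y *v x)" using q split b1 by linarith
qed

lemma X_relint: "X \<in> rel_interior centred_face"
proof -
  define L0 where "L0 = {Y::real^'v^'v. transpose Y = Y \<and> Y *v 1 = 0}"
  have "affine hull centred_face \<subseteq> L0"
    by (rule hull_minimal) (auto simp: L0_def centred_face_def psd_def intro!: subspace_imp_affine L0_subspace[unfolded])
  moreover define \<delta> where "\<delta> = s / (n * n)"
  have \<delta>: "\<delta> > 0" using s_pos n_pos by (simp add: \<delta>_def)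
  have "ball X \<delta> \<inter> L0 \<subseteq> centred_face"
  proof
    fix Y assume Y: "Y \<in> ball X \<delta> \<inter> L0"
    then have "norm (Y - X) < \<delta>" by (simp add: dist_norm norm_minus_commute)
    then have "n * n * norm (Y - X) \<le> s" using n_pos by (simp add: \<delta>_def field_simps)
    then have "psd Y" using Y near_psd unfolding L0_def by blast
    then show "Y \<in> centred_face" using Y unfolding centred_face_def L0_def by simp
  qed
  ultimately show ?thesis using \<delta> X_face unfolding mem_rel_interior_ball by blast
qed

end


lemma stress_zero:
  fixes E :: "'v::finite set set"
  assumes "\<forall>e\<in>E. \<omega> e = 0" shows "stress_matrix E \<omega> = 0"
  using assms unfolding stress_matrix_def by (simp add: vec_eq_iff)

theorem mainTheorem9:
  fixes E :: "'v::finite set set" and p :: "'v \<Rightarrow> real^2"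
  assumes "simple_graph E"
    and "laman_sparse E"
    and "generic p"
  shows "sing_degree_zero E p
    \<and> \<not> (\<exists>\<omega>. equilibrium_stress E p \<omega> \<and> psd (stress_matrix E \<omega>) \<and> stress_matrix E \<omega> \<noteq> 0)
    \<and> (\<exists>X. X \<in> edm_feasible E p \<and> rank X = CARD('v) - 1)"
proof -
  have ind: "indep E p" by (rule indep_sparse[OF assms(3) assms(1) assms(2)])
  have part2: "\<not> (\<exists>\<omega>. equilibrium_stress E p \<omega> \<and> psd (stress_matrix E \<omega>) \<and> stress_matrix E \<omega> \<noteq> 0)"
  proof
    assume "\<exists>\<omega>. equilibrium_stress E p \<omega> \<and> psd (stress_matrix E \<omega>) \<and> stress_matrix E \<omega> \<noteq> 0"
    then obtain \<omega> where w: "equilibrium_stress E p \<omega>" "stress_matrix E \<omega> \<noteq> 0" by blast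
    have "eqs E p \<omega>" using w(1) eqs_iff[OF assms(1)] by blast
    then have "\<forall>e\<in>E. \<omega> e = 0" using ind unfolding indep_def by blast
    then show False using stress_zero w(2) by blast
  qed
  obtain c and P' :: "real^2^'v" where c: "c > 0" and P': "\<forall>e\<in>E.
     (P' $ ea e - P' $ eb e) \<bullet> (P' $ ea e - P' $ eb e) = (p (ea e) - p (eb e)) \<bullet> (p (ea e) - p (eb e)) - c"
    using perturbed[OF assms(1) ind] by blast
  interpret Cn: construction P' "c / 2" by unfold_locales (use c in simp)
  have feas: "Cn.X \<in> edm_feasible E p"
    unfolding edm_feasible_def
  proof (intro CollectI conjI allI impI)
    show "Cn.X \<in> centred_face" by (rule Cn.X_face)
    fix i j assume ij: "{i, j} \<in> E"
    have ne: "i \<noteq> j" using simple_pair[OF assms(1) ij] .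
    have c2: "card {i, j} = 2" using ne by simp
    have ab: "{ea {i, j}, eb {i, j}} = {i, j}" "ea {i, j} \<noteq> eb {i, j}" using ea_eb[OF c2] by auto
    define a where "a = ea {i, j}"
    define b where "b = eb {i, j}"
    have Pab: "(P' $ a - P' $ b) \<bullet> (P' $ a - P' $ b) = (p a - p b) \<bullet> (p a - p b) - c"
      unfolding a_def b_def using bspec[OF P' ij] .
    have ab2: "{a, b} = {i, j}" "a \<noteq> b" using ab unfolding a_def b_def by simp_all
    have cases: "(a = i \<and> b = j) \<or> (a = j \<and> b = i)" using ab2 by (simp add: doubleton_eq_iff)
    have sw1: "(P' $ j - P' $ i) \<bullet> (P' $ j - P' $ i) = (P' $ i - P' $ j) \<bullet> (P' $ i - P' $ j)"
      by (simp add: inner_diff_left inner_diff_right inner_commute)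
    have sw2: "(p j - p i) \<bullet> (p j - p i) = (p i - p j) \<bullet> (p i - p j)"
      by (simp add: inner_diff_left inner_diff_right inner_commute)
    have key: "(P' $ i - P' $ j) \<bullet> (P' $ i - P' $ j) = (p i - p j) \<bullet> (p i - p j) - c"
      using cases Pab sw1 sw2 by auto
    show "Kmap Cn.X i j = (norm (p i - p j))\<^sup>2"
      using Cn.X_Kmap[OF ne] key by (simp add: power2_norm_eq_inner)
  qed
  have part1: "sing_degree_zero E p"
    unfolding sing_degree_zero_def using feas Cn.X_relint by blast
  show ?thesis using part1 part2 feas Cn.X_rank by blast
qed


end
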